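(* Let $C$ be an $(n,k)$ linear code over $H(\mathbb{Z})_{2+e_1}$. If $C$ corrects all errors of Lipschitz weight $2$ or less, then $(5^2)^{n-k}\ge 32n^2-8n+1$.
   Context: $H(\mathbb{Z})=\{a_0+a_1e_1+a_2e_2+a_3e_3:a_i\in\mathbb{Z}\}$ (Lipschitz integers) with quaternion multiplication $e_1^2=e_2^2=e_3^2=-1$, $e_1e_2=-e_2e_1=e_3$, $e_3e_1=-e_1e_3=e_2$, $e_2e_3=-e_3e_2=e_1$; $N(q)=a_0^2+a_1^2+a_2^2+a_3^2$. Right congruence: $q_1\equiv_r q_2 \pmod\pi$ iff $q_1-q_2=\delta\pi$ for some $\delta\in H(\mathbb{Z})$; $H(\mathbb{Z})_\pi=H(\mathbb{Z})/H(\mathbb{Z})\pi$, which has $N(\pi)^2$ elements (here $N(2+e_1)=5$). The Lipschitz weight of a class $\gamma$ is $\min\{|a_0|+|a_1|+|a_2|+|a_3| : a_0+a_1e_1+a_2e_2+a_3e_3\in\gamma\}$; the weight of a vector is the sum of the weights of its components. An $(n,k)$ linear code over $H(\mathbb{Z})_\pi$ is an additive subgroup $C\subseteq H(\mathbb{Z})_\pi^n$ such that $H(\mathbb{Z})_\pi^n/C$ has exactly $(N(\pi)^2)^{n-k}$ cosets. $C$ corrects all errors of weight $t$ or less if all vectors of Lipschitz weight at most $t$ lie in pairwise distinct cosets of $C$. *)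

theory Defs
  imports Main
begin

text \<open>Lipschitz integers a0 + a1 e1 + a2 e2 + a3 e3, represented as integer quadruples.\<close>
type_synonym lip = "int \<times> int \<times> int \<times> int"

fun lip_add :: "lip \<Rightarrow> lip \<Rightarrow> lip" where
  "lip_add (a0,a1,a2,a3) (b0,b1,b2,b3) = (a0+b0, a1+b1, a2+b2, a3+b3)"

fun lip_neg :: "lip \<Rightarrow> lip" where
  "lip_neg (a0,a1,a2,a3) = (-a0, -a1, -a2, -a3)"

definition lip_diff :: "lip \<Rightarrow> lip \<Rightarrow> lip" where
  "lip_diff a b = lip_add a (lip_neg b)"

text \<open>Quaternion product: e1^2=e2^2=e3^2=-1, e1e2=e3, e2e3=e1, e3e1=e2.\<close>
fun lip_mult :: "lip \<Rightarrow> lip \<Rightarrow> lip" where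
  "lip_mult (a0,a1,a2,a3) (b0,b1,b2,b3) =
     (a0*b0 - a1*b1 - a2*b2 - a3*b3,
      a0*b1 + a1*b0 + a2*b3 - a3*b2,
      a0*b2 - a1*b3 + a2*b0 + a3*b1,
      a0*b3 + a1*b2 - a2*b1 + a3*b0)"

definition rcong :: "lip \<Rightarrow> lip \<Rightarrow> lip \<Rightarrow> bool" where
  "rcong \<pi> q1 q2 \<longleftrightarrow> (\<exists>\<delta>. lip_diff q1 q2 = lip_mult \<delta> \<pi>)"

definition lip_class :: "lip \<Rightarrow> lip \<Rightarrow> lip set" where
  "lip_class \<pi> q = {q'. rcong \<pi> q' q}"

definition Hpi :: "lip \<Rightarrow> lip set set" where
  "Hpi \<pi> = range (lip_class \<pi>)"

text \<open>Addition of classes (Minkowski sum of classes = class of the sum).\<close>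
definition cls_add :: "lip set \<Rightarrow> lip set \<Rightarrow> lip set" where
  "cls_add A B = {lip_add a b | a b. a \<in> A \<and> b \<in> B}"

definition cls_neg :: "lip set \<Rightarrow> lip set" where
  "cls_neg A = lip_neg ` A"

definition Hpi_vec :: "lip \<Rightarrow> nat \<Rightarrow> lip set list set" where
  "Hpi_vec \<pi> n = {v. length v = n \<and> set v \<subseteq> Hpi \<pi>}"

definition vec_add :: "lip set list \<Rightarrow> lip set list \<Rightarrow> lip set list" where
  "vec_add u v = map2 cls_add u v"

definition vec_neg :: "lip set list \<Rightarrow> lip set list" where
  "vec_neg v = map cls_neg v"

definition vec_zero :: "lip \<Rightarrow> nat \<Rightarrow> lip set list" where
  "vec_zero \<pi> n = replicate n (lip_class \<pi> (0,0,0,0))"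

definition additive_subgroup :: "lip \<Rightarrow> nat \<Rightarrow> lip set list set \<Rightarrow> bool" where
  "additive_subgroup \<pi> n C \<longleftrightarrow> C \<subseteq> Hpi_vec \<pi> n \<and> vec_zero \<pi> n \<in> C \<and>
     (\<forall>u\<in>C. \<forall>v\<in>C. vec_add u v \<in> C) \<and> (\<forall>u\<in>C. vec_neg u \<in> C)"

definition vcoset :: "lip set list set \<Rightarrow> lip set list \<Rightarrow> lip set list set" where
  "vcoset C v = {vec_add v c | c. c \<in> C}"


fun lip_N :: "lip \<Rightarrow> int" where
  "lip_N (a0,a1,a2,a3) = a0^2 + a1^2 + a2^2 + a3^2"

definition linear_code :: "lip \<Rightarrow> nat \<Rightarrow> nat \<Rightarrow> lip set list set \<Rightarrow> bool" where
  "linear_code \<pi> n k C \<longleftrightarrow> additive_subgroup \<pi> n C \<and>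
     int (card (vcoset C ` Hpi_vec \<pi> n)) = (lip_N \<pi> ^ 2) ^ (n - k)"

fun lip_abs_sum :: "lip \<Rightarrow> nat" where
  "lip_abs_sum (a0,a1,a2,a3) = nat \<bar>a0\<bar> + nat \<bar>a1\<bar> + nat \<bar>a2\<bar> + nat \<bar>a3\<bar>"

definition cls_weight :: "lip set \<Rightarrow> nat" where
  "cls_weight \<gamma> = (LEAST w. \<exists>a\<in>\<gamma>. lip_abs_sum a = w)"

definition vec_weight :: "lip set list \<Rightarrow> nat" where
  "vec_weight v = sum_list (map cls_weight v)"

definition corrects :: "lip \<Rightarrow> nat \<Rightarrow> lip set list set \<Rightarrow> nat \<Rightarrow> bool" where
  "corrects \<pi> n C t \<longleftrightarrow> (\<forall>u\<in>Hpi_vec \<pi> n. \<forall>v\<in>Hpi_vec \<pi> n.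
      vec_weight u \<le> t \<longrightarrow> vec_weight v \<le> t \<longrightarrow> u \<noteq> v \<longrightarrow> vcoset C u \<noteq> vcoset C v)"

end

theory Submission imports Defs begin


definition key :: "lip \<Rightarrow> nat \<times> nat" where
  "key q = (case q of (a,b,c,d) \<Rightarrow> (nat ((2*a+b) mod 5), nat ((2*c-d) mod 5)))"

lemma rcong_key: "rcong (2,1,0,0) q q' \<longleftrightarrow> key q = key q'"
proof -
  obtain a b c d where q: "q = (a,b,c,d)" by (cases q) auto
  obtain a' b' c' d' where q': "q' = (a',b',c',d')" by (cases q') auto
  have "key q = key q' \<longleftrightarrow> (5::int) dvd (2*(a-a')+(b-b')) \<and> (5::int) dvd (2*(c-c')-(d-d'))"
  proof -
    have e1: "nat ((2*a+b) mod 5) = nat ((2*a'+b') mod 5) \<longleftrightarrow> (2*a+b) mod 5 = (2*a'+b') mod (5::int)"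
      by (simp add: nat_eq_iff)
    have e2: "nat ((2*c-d) mod 5) = nat ((2*c'-d') mod 5) \<longleftrightarrow> (2*c-d) mod 5 = (2*c'-d') mod (5::int)"
      by (simp add: nat_eq_iff)
    show ?thesis unfolding key_def q q' using e1 e2
      by (simp add: mod_eq_dvd_iff algebra_simps)
  qed
  also have "\<dots> \<longleftrightarrow> rcong (2,1,0,0) q q'"
  proof
    assume "(5::int) dvd (2*(a-a')+(b-b')) \<and> (5::int) dvd (2*(c-c')-(d-d'))"
    then obtain k m where k: "2*(a-a')+(b-b') = 5*k" and m: "2*(c-c')-(d-d') = 5*m"
      by (auto elim!: dvdE)
    show "rcong (2,1,0,0) q q'" unfolding rcong_def q q' lip_diff_def
      apply (rule exI[of _ "(k, 2*k-(a-a'), m, (c-c') - 2*m)"])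
      using k m by (simp add: algebra_simps)
  next
    assume "rcong (2,1,0,0) q q'"
    then obtain d0 d1 d2 d3 where "lip_diff q q' = lip_mult (d0,d1,d2,d3) (2,1,0,0)"
      unfolding rcong_def by (metis prod_cases4)
    then have "a - a' = 2*d0 - d1" "b - b' = d0 + 2*d1" "c - c' = 2*d2+d3" "d-d' = -d2+2*d3"
      unfolding q q' lip_diff_def by (simp_all add: algebra_simps)
    then have "2*(a-a')+(b-b') = 5*d0" "2*(c-c')-(d-d') = 5*d2" by simp_all
    then show "(5::int) dvd (2*(a-a')+(b-b')) \<and> (5::int) dvd (2*(c-c')-(d-d'))"
      by simp
  qed
  finally show ?thesis by simp
qed

lemma class_eq: "lip_class (2,1,0,0) q = {p. key p = key q}"
  unfolding lip_class_def rcong_key ..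

lemma class_eq_iff: "lip_class (2,1,0,0) q = lip_class (2,1,0,0) q' \<longleftrightarrow> key q = key q'"
  unfolding class_eq by auto

lemma weight_le: "cls_weight (lip_class (2,1,0,0) q) \<le> lip_abs_sum q"
  unfolding cls_weight_def
proof (rule Least_le)
  show "\<exists>a\<in>lip_class (2,1,0,0) q. lip_abs_sum a = lip_abs_sum q"
    by (rule bexI[of _ q]) (auto simp: class_eq)
qed



definition K :: "(nat \<times> nat) set" where "K = {0,1,2,3,4} \<times> {0,1,2,3,4}"

fun wt :: "nat \<times> nat \<Rightarrow> nat" where
  "wt (a,b) = (if a = 0 then 0 else 1) + (if b = 0 then 0 else 1)"

definition T :: "nat \<Rightarrow> nat \<Rightarrow> (nat \<times> nat) list set" where
  "T n w = {ks. length ks = n \<and> set ks \<subseteq> K \<and> sum_list (map wt ks) \<le> w}"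

lemma finK: "finite K" by (simp add: K_def)

lemma finT: "finite (T n w)"
proof -
  have "T n w \<subseteq> {xs. set xs \<subseteq> K \<and> length xs = n}" by (auto simp: T_def)
  moreover have "finite {xs. set xs \<subseteq> K \<and> length xs = n}"
    using finK by (rule finite_lists_length_eq)
  ultimately show ?thesis by (rule finite_subset)
qed

lemma T0: "T 0 w = {[]}" by (auto simp: T_def)

lemma T_Suc: "T (Suc n) w = (\<lambda>(x,xs). x # xs) ` (SIGMA x:{x\<in>K. wt x \<le> w}. T n (w - wt x))"
proof (rule set_eqI)
  fix ys show "ys \<in> T (Suc n) w \<longleftrightarrow> ys \<in> (\<lambda>(x,xs). x # xs) ` (SIGMA x:{x\<in>K. wt x \<le> w}. T n (w - wt x))"
  proof
    assume "ys \<in> T (Suc n) w"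
    then obtain x xs where ys: "ys = x # xs" and "length xs = n" "x \<in> K" "set xs \<subseteq> K"
      "wt x + sum_list (map wt xs) \<le> w"
      unfolding T_def by (cases ys) auto
    then show "ys \<in> (\<lambda>(x,xs). x # xs) ` (SIGMA x:{x\<in>K. wt x \<le> w}. T n (w - wt x))"
      by (auto simp: T_def intro!: image_eqI[of _ _ "(x,xs)"])
  next
    assume "ys \<in> (\<lambda>(x,xs). x # xs) ` (SIGMA x:{x\<in>K. wt x \<le> w}. T n (w - wt x))"
    then show "ys \<in> T (Suc n) w" by (auto simp: T_def)
  qed
qed

lemma card_T_Suc: "card (T (Suc n) w) = (\<Sum>x\<in>{x\<in>K. wt x \<le> w}. card (T n (w - wt x)))"
proof -
  have "inj_on (\<lambda>(x,xs). x # xs) (SIGMA x:{x\<in>K. wt x \<le> w}. T n (w - wt x))"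
    by (auto simp: inj_on_def)
  then have "card (T (Suc n) w) = card (SIGMA x:{x\<in>K. wt x \<le> w}. T n (w - wt x))"
    unfolding T_Suc by (rule card_image)
  also have "\<dots> = (\<Sum>x\<in>{x\<in>K. wt x \<le> w}. card (T n (w - wt x)))"
    by (rule card_SigmaI) (auto simp: finK finT)
  finally show ?thesis .
qed

lemma card_T_Suc': "card (T (Suc n) w) = (\<Sum>x\<in>K. if wt x \<le> w then card (T n (w - wt x)) else 0)"
  unfolding card_T_Suc by (simp add: sum.inter_filter[OF finK])

lemma card_T: "card (T n 0) = 1 \<and> card (T n 1) = 1 + 8*n \<and> int (card (T n 2)) = 32 * int n ^ 2 - 8 * int n + 1"
proof (induction n)
  case 0 show ?case by (simp add: T0)
next
  case (Suc n)
  then have h0: "card (T n 0) = 1" and h1: "card (T n 1) = 1 + 8*n"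
    and h2: "int (card (T n 2)) = 32 * int n ^ 2 - 8 * int n + 1" by auto
  have a: "card (T (Suc n) 0) = card (T n 0)" unfolding card_T_Suc' K_def
    by simp
  have b: "card (T (Suc n) 1) = card (T n 1) + 8 * card (T n 0)" unfolding card_T_Suc' K_def
    by simp
  have c: "card (T (Suc n) 2) = card (T n 2) + 8 * card (T n 1) + 16 * card (T n 0)" unfolding card_T_Suc' K_def
    by simp
  show ?case using a b c h0 h1 h2 by (simp add: algebra_simps power2_eq_square)
qed



fun u :: "nat \<Rightarrow> lip" where
  "u a = (if a = 1 then (0,1,0,0) else if a = 2 then (1,0,0,0) else if a = 3 then (-1,0,0,0)
          else if a = 4 then (0,-1,0,0) else (0,0,0,0))"
fun v :: "nat \<Rightarrow> lip" where
  "v b = (if b = 1 then (0,0,0,-1) else if b = 2 then (0,0,1,0) else if b = 3 then (0,0,-1,0)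
          else if b = 4 then (0,0,0,1) else (0,0,0,0))"
fun rep :: "nat \<times> nat \<Rightarrow> lip" where
  "rep (a,b) = lip_add (u a) (v b)"

lemma rep_props: "x \<in> K \<Longrightarrow> key (rep x) = x \<and> lip_abs_sum (rep x) = wt x"
  unfolding K_def by (elim SigmaE insertE; simp add: key_def)

definition F :: "(nat \<times> nat) list \<Rightarrow> lip set list" where
  "F ks = map (\<lambda>x. lip_class (2,1,0,0) (rep x)) ks"

lemma inj_F: "inj_on F (T n w)"
proof (rule inj_onI)
  fix xs ys assume xs: "xs \<in> T n w" and ys: "ys \<in> T n w" and e: "F xs = F ys"
  have "inj_on (\<lambda>x. lip_class (2,1,0,0) (rep x)) (set xs \<union> set ys)"
  proof (rule inj_onI)
    fix x y assume "x \<in> set xs \<union> set ys" "y \<in> set xs \<union> set ys"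
      and "lip_class (2,1,0,0) (rep x) = lip_class (2,1,0,0) (rep y)"
    moreover have "x \<in> K" "y \<in> K" using xs ys \<open>x \<in> set xs \<union> set ys\<close> \<open>y \<in> set xs \<union> set ys\<close>
      by (auto simp: T_def)
    ultimately show "x = y" using rep_props[of x] rep_props[of y] class_eq_iff[of "rep x" "rep y"] by simp
  qed
  then show "xs = ys" using e map_inj_on unfolding F_def by blast
qed

lemma F_in: "ks \<in> T n w \<Longrightarrow> F ks \<in> Hpi_vec (2,1,0,0) n"
  by (auto simp: F_def T_def Hpi_vec_def Hpi_def)

lemma F_weight: "ks \<in> T n w \<Longrightarrow> vec_weight (F ks) \<le> w"
proof -
  assume ks: "ks \<in> T n w"
  have "vec_weight (F ks) = sum_list (map (\<lambda>x. cls_weight (lip_class (2,1,0,0) (rep x))) ks)"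
    by (simp add: vec_weight_def F_def o_def)
  also have "\<dots> \<le> sum_list (map wt ks)"
  proof (rule sum_list_mono)
    fix x assume "x \<in> set ks"
    then have "x \<in> K" using ks by (auto simp: T_def)
    then show "cls_weight (lip_class (2,1,0,0) (rep x)) \<le> wt x"
      using weight_le[of "rep x"] rep_props[of x] by simp
  qed
  also have "\<dots> \<le> w" using ks by (simp add: T_def)
  finally show ?thesis .
qed

theorem theorem8:
  fixes n k :: nat and C :: "lip set list set"
  assumes "k \<le> n"
    and "linear_code (2,1,0,0) n k C"
    and "corrects (2,1,0,0) n C 2"
  shows "((5::int)^2) ^ (n - k) \<ge> 32 * int n ^ 2 - 8 * int n + 1"
proof -
  have cd: "int (card (vcoset C ` Hpi_vec (2,1,0,0) n)) = ((5::int)^2) ^ (n - k)"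
    using assms(2) unfolding linear_code_def by simp
  then have "card (vcoset C ` Hpi_vec (2,1,0,0) n) \<noteq> 0" by simp
  then have fin: "finite (vcoset C ` Hpi_vec (2,1,0,0) n)" by (meson card.infinite)
  have sub: "vcoset C ` F ` T n 2 \<subseteq> vcoset C ` Hpi_vec (2,1,0,0) n" using F_in by blast
  have inj: "inj_on (vcoset C) (F ` T n 2)"
  proof (rule inj_onI)
    fix x y assume "x \<in> F ` T n 2" "y \<in> F ` T n 2" "vcoset C x = vcoset C y"
    then obtain a b where "a \<in> T n 2" "b \<in> T n 2" "x = F a" "y = F b" by blast
    then show "x = y" using assms(3) F_in[of a n 2] F_in[of b n 2] F_weight[of a n 2] F_weight[of b n 2]
      \<open>vcoset C x = vcoset C y\<close> unfolding corrects_def by blast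
  qed
  have "card (T n 2) = card (F ` T n 2)" using inj_F by (simp add: card_image)
  also have "\<dots> = card (vcoset C ` F ` T n 2)" using inj by (simp add: card_image)
  also have "\<dots> \<le> card (vcoset C ` Hpi_vec (2,1,0,0) n)" using card_mono[OF fin sub] .
  finally have "int (card (T n 2)) \<le> ((5::int)^2) ^ (n - k)" using cd by linarith
  then show ?thesis using card_T by simp
qed

end
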